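(* Let $\varphi$ be the rational map of the Riemann sphere $\hat{\mathbb{C}}$ given by $$\varphi(z)=\frac{z(2+z)(1+z-z^2)}{(1+2z)(1-z-z^2)},$$ and let $\omega=e^{2\pi i/3}$. Then $\omega$ and $\omega^2$ are attracting fixed points of $\varphi$; for every $z\in\mathbb{C}$ with $\operatorname{Im}z>0$ one has $\varphi^{\circ n}(z)\to\omega$, and for every $z\in\mathbb{C}$ with $\operatorname{Im}z<0$ one has $\varphi^{\circ n}(z)\to\omega^2$ as $n\to\infty$. The extended real line $\mathbb{R}\cup\{\infty\}$ is forward and backward invariant under $\varphi$. *)

theory Defs
  imports "HOL-Analysis.Analysis"
begin

definition phi_num :: "complex \<Rightarrow> complex" where
  "phi_num z = z * (2 + z) * (1 + z - z^2)"

definition phi_den :: "complex \<Rightarrow> complex" where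
  "phi_den z = (1 + 2*z) * (1 - z - z^2)"

text \<open>The map on the finite plane (only used away from the poles).\<close>
definition phi :: "complex \<Rightarrow> complex" where
  "phi z = phi_num z / phi_den z"

text \<open>The Riemann sphere modelled as complex option, None being infinity.
  The extension of phi: poles go to infinity, and infinity goes to infinity
  (deg numerator 4 > deg denominator 3; numerator and denominator are coprime).\<close>
fun phi_hat :: "complex option \<Rightarrow> complex option" where
  "phi_hat None = None"
| "phi_hat (Some z) = (if phi_den z = 0 then None else Some (phi z))"

definition ext_real_line :: "complex option set" where
  "ext_real_line = insert None (Some ` \<real>)"

definition omega :: complex where
  "omega = cis (2 * pi / 3)"

end

theory Submission
  imports Defs "HOL-Complex_Analysis.Conformal_Mappings"
begin


lemma omega_eq: "omega = Complex (-1/2) (sqrt 3 / 2)"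
  unfolding omega_def by (simp add: complex_eq_iff cos_120 sin_120)

lemma omega_root: "omega^2 + omega + 1 = 0"
  by (simp add: omega_eq complex_eq_iff power2_eq_square)

lemma omega_Im: "Im omega > 0"
  by (simp add: omega_eq)

lemma omega_cnj: "cnj omega = omega^2"
  by (simp add: omega_eq complex_eq_iff power2_eq_square)

lemma den_factor: "phi_den z = - ((2*z+1) * (z^2+z-1))"
  unfolding phi_den_def by (simp add: algebra_simps power2_eq_square)

lemma aux_cancel: "(w::complex) \<noteq> 0 \<Longrightarrow> c/(d*w) * (w*q) = c/d*q"
  by (simp add: field_simps)

lemma aux_cancel2: "(q::complex) \<noteq> 0 \<Longrightarrow> c*w/(d*q) * (w*q) = c/d*w*w"
  by (simp add: field_simps)

lemma aux_distr: "((x::complex) - a - b)*m = x*m - a*m - b*m"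
  by (simp add: algebra_simps)

lemma phi_pf:
  assumes "phi_den z \<noteq> 0"
  shows "phi z = z/2 - 1/4 - 3/(20*(2*z+1)) - 2*(2*z+1)/(5*(z^2+z-1))"
proof -
  have a: "2*z+1 \<noteq> 0" and b: "z^2+z-1 \<noteq> 0" using assms by (auto simp: den_factor)
  have e: "(z/2 - 1/4 - 3/(20*(2*z+1)) - 2*(2*z+1)/(5*(z^2+z-1))) * ((2*z+1) * (z^2+z-1))
      = ((z/2 - 1/4)*((2*z+1) * (z^2+z-1)) - 3/20*(z^2+z-1) - 2/5*(2*z+1)*(2*z+1))"
    unfolding aux_distr aux_cancel[OF a] aux_cancel2[OF b] ..
  have "phi_num z = (z/2 - 1/4 - 3/(20*(2*z+1)) - 2*(2*z+1)/(5*(z^2+z-1))) * phi_den z"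
    unfolding den_factor mult_minus_right e
    by (simp add: phi_num_def algebra_simps power2_eq_square power3_eq_cube power4_eq_xxxx) (simp add: field_simps)
  then show ?thesis using assms unfolding phi_def by simp
qed

lemma Im_piece1: "Im (3/(20*(2*z+1))) = - (3/10) * Im z / ((2*Re z+1)^2+(2*Im z)^2)"
proof -
  have "3/(20*(2*z+1)) = complex_of_real (3/20) * (1/(2*z+1))" by simp
  then have "Im (3/(20*(2*z+1))) = 3/20 * Im (1/(2*z+1))" by (metis times_complex.sel(2) Re_complex_of_real Im_complex_of_real mult_zero_left add_0_right)
  also have "Im (1/(2*z+1)) = - (2*Im z) / ((2*Re z+1)^2+(2*Im z)^2)"
    by (simp add: Im_divide)
  finally show ?thesis by simp
qed
lemma Re_q: "Re (z^2+z-1) = (Re z)^2 - (Im z)^2 + Re z - 1" by (simp add: power2_eq_square)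
lemma Im_q: "Im (z^2+z-1) = 2 * Re z * Im z + Im z" by (simp add: power2_eq_square)

lemma Im_piece2: "Im (2*(2*z+1)/(5*(z^2+z-1))) =
   - (2/5) * Im z * (2*(Re z)^2 + 2*Re z + 3 + 2*(Im z)^2) / ((Re (z^2+z-1))^2 + (Im (z^2+z-1))^2)"
proof -
  have "2*(2*z+1)/(5*(z^2+z-1)) = complex_of_real (2/5) * ((2*z+1)/(z^2+z-1))" by simp
  then have "Im (2*(2*z+1)/(5*(z^2+z-1))) = 2/5 * Im ((2*z+1)/(z^2+z-1))"
    by (metis times_complex.sel(2) Re_complex_of_real Im_complex_of_real mult_zero_left add_0_right)
  also have "Im ((2*z+1)/(z^2+z-1)) = (2*Im z * Re (z^2+z-1) - (2*Re z+1) * Im (z^2+z-1)) / ((Re (z^2+z-1))^2 + (Im (z^2+z-1))^2)"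
    by (simp only: Im_divide) simp
  also have "2*Im z * Re (z^2+z-1) - (2*Re z+1) * Im (z^2+z-1) = - Im z * (2*(Re z)^2 + 2*Re z + 3 + 2*(Im z)^2)"
    unfolding Re_q Im_q by (simp add: algebra_simps power2_eq_square)
  finally show ?thesis by simp
qed
definition Kf :: "complex \<Rightarrow> real" where
  "Kf z = 1/2 + (3/10) / ((2*Re z+1)^2+(2*Im z)^2)
     + (2/5) * (2*(Re z)^2 + 2*Re z + 3 + 2*(Im z)^2) / ((Re (z^2+z-1))^2 + (Im (z^2+z-1))^2)"

lemma Kf_pos: "Kf z > 0"
proof -
  have "2*(Re z)^2 + 2*Re z + 3 + 2*(Im z)^2 = 2*(Re z + 1/2)^2 + 5/2 + 2*(Im z)^2"
    by (simp add: power2_eq_square algebra_simps)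
  also have "\<dots> > 0" using zero_le_power2[of "Re z + 1/2"] zero_le_power2[of "Im z"] by linarith
  finally have "(2/5) * (2*(Re z)^2 + 2*Re z + 3 + 2*(Im z)^2) / ((Re (z^2+z-1))^2 + (Im (z^2+z-1))^2) \<ge> 0"
    by simp
  moreover have "(3/10) / ((2*Re z+1)^2+(2*Im z)^2) \<ge> 0" by simp
  ultimately show ?thesis unfolding Kf_def by linarith
qed

lemma aux_real: "(y::real)/2 - (-(3/10)*y/D1) - (-(2/5)*y*E/D2) = y*(1/2 + (3/10)/D1 + (2/5)*E/D2)"
  by (simp add: algebra_simps)

lemma Im_phi: "phi_den z \<noteq> 0 \<Longrightarrow> Im (phi z) = Im z * Kf z"
proof -
  assume d: "phi_den z \<noteq> 0"
  have "Im (phi z) = Im z / 2 - Im (3/(20*(2*z+1))) - Im (2*(2*z+1)/(5*(z^2+z-1)))"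
    unfolding phi_pf[OF d] by simp
  also have "\<dots> = Im z * Kf z"
    unfolding Im_piece1 Im_piece2 Kf_def by (rule aux_real)
  finally show ?thesis .
qed


lemma den_zero_real: "phi_den z = 0 \<Longrightarrow> Im z = 0"
proof -
  assume "phi_den z = 0"
  then have "2*z+1 = 0 \<or> z^2+z-1 = 0" by (simp add: den_factor)
  then show "Im z = 0"
  proof
    assume "2*z+1 = 0"
    then have "Im (2*z+1) = 0" by simp
    then show ?thesis by simp
  next
    assume q: "z^2+z-1 = 0"
    then have i: "2 * Re z * Im z + Im z = 0" and r: "(Re z)^2 - (Im z)^2 + Re z - 1 = 0"
      using Re_q[of z] Im_q[of z] by simp_all
    show ?thesis
    proof (rule ccontr)
      assume "Im z \<noteq> 0"
      have "Im z * (2*Re z + 1) = 0" using i by (simp add: algebra_simps)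
      then have "2*Re z + 1 = 0" using \<open>Im z \<noteq> 0\<close> by simp
      then have "Re z = -1/2" by simp
      with r have "(Im z)^2 = - 5/4" by (simp add: power2_eq_square)
      then show False using zero_le_power2[of "Im z"] by simp
    qed
  qed
qed

lemma Im_pos_phi: "Im z > 0 \<Longrightarrow> phi_den z \<noteq> 0 \<and> Im (phi z) > 0"
proof -
  assume a: "Im z > 0"
  then have d: "phi_den z \<noteq> 0" using den_zero_real[of z] by auto
  then have "Im (phi z) = Im z * Kf z" by (rule Im_phi)
  with a Kf_pos[of z] d show ?thesis by simp
qed

lemma Im_neg_phi: "Im z < 0 \<Longrightarrow> phi_den z \<noteq> 0 \<and> Im (phi z) < 0"
proof -
  assume a: "Im z < 0"
  then have d: "phi_den z \<noteq> 0" using den_zero_real[of z] by auto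
  then have "Im (phi z) = Im z * Kf z" by (rule Im_phi)
  with a Kf_pos[of z] d show ?thesis by (simp add: mult_neg_pos)
qed

lemma phi_cnj: "phi (cnj z) = cnj (phi z)"
  by (simp add: phi_def phi_num_def phi_den_def)

lemma ext_real_fwd: "phi_hat ` ext_real_line \<subseteq> ext_real_line"
proof
  fix y assume "y \<in> phi_hat ` ext_real_line"
  then obtain x where x: "x \<in> ext_real_line" "y = phi_hat x" by blast
  show "y \<in> ext_real_line"
  proof (cases x)
    case None then show ?thesis using x by (simp add: ext_real_line_def)
  next
    case (Some z)
    then have z: "z \<in> \<real>" using x by (auto simp: ext_real_line_def)
    show ?thesis
    proof (cases "phi_den z = 0")
      case True then show ?thesis using x Some by (simp add: ext_real_line_def)
    next
      case False
      then have "Im (phi z) = 0" using Im_phi[of z] z by (simp add: complex_is_Real_iff)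
      then show ?thesis using x Some False by (simp add: ext_real_line_def complex_is_Real_iff)
    qed
  qed
qed

lemma ext_real_bwd: "phi_hat -` ext_real_line \<subseteq> ext_real_line"
proof
  fix x assume x: "x \<in> phi_hat -` ext_real_line"
  show "x \<in> ext_real_line"
  proof (cases x)
    case None then show ?thesis by (simp add: ext_real_line_def)
  next
    case (Some z)
    show ?thesis
    proof (cases "phi_den z = 0")
      case True then show ?thesis using den_zero_real[of z] Some by (simp add: ext_real_line_def complex_is_Real_iff)
    next
      case False
      then have "Im (phi z) = 0" using x Some by (auto simp add: ext_real_line_def complex_is_Real_iff)
      then have "Im z = 0" using Im_phi[OF False] Kf_pos[of z] by simp
      then show ?thesis using Some by (simp add: ext_real_line_def complex_is_Real_iff)
    qed
  qed
qed

lemma fixed_root: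
  assumes r: "r^2 + r + 1 = 0"
  shows "phi_den r \<noteq> 0" "phi r = r" "(phi has_field_derivative 1/2) (at r)"
proof -
  have r3: "r^3 = 1"
  proof -
    have "r^3 = (r - 1) * (r^2 + r + 1) + 1" by (simp add: algebra_simps power2_eq_square power3_eq_cube)
    then show ?thesis using r by simp
  qed
  have r4: "r^4 = r" using r3 by (simp add: power4_eq_xxxx power3_eq_cube)
  have nform: "phi_num z = -(z^4) - z^3 + 3*z^2 + 2*z" for z
    by (simp add: phi_num_def algebra_simps power2_eq_square power3_eq_cube power4_eq_xxxx)
  have dform: "phi_den z = -(2*z^3) - 3*z^2 + z + 1" for z
    by (simp add: phi_den_def algebra_simps power2_eq_square power3_eq_cube)
  have nr: "phi_num r = -2*r-4"
  proof -
    have "phi_num r = -r - 1 + 3*r^2 + 2*r" unfolding nform r4 r3 by simp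
    also have "\<dots> = 3*(r^2+r+1) - 2*r - 4" by (simp add: algebra_simps)
    finally show ?thesis using r by simp
  qed
  have dr: "phi_den r = 4*r+2"
  proof -
    have "phi_den r = -2 - 3*r^2 + r + 1" unfolding dform r3 by simp
    also have "\<dots> = -3*(r^2+r+1) + 4*r + 2" by (simp add: algebra_simps)
    finally show ?thesis using r by simp
  qed
  have sq: "(4*r+2)*(4*r+2) = -12"
  proof -
    have "(4*r+2)*(4*r+2) = 16*(r^2+r+1) - 12" by (simp add: algebra_simps power2_eq_square)
    then show ?thesis using r by simp
  qed
  have nz: "4*r+2 \<noteq> 0" using sq by auto
  then show dnz: "phi_den r \<noteq> 0" using dr by simp
  have "r * (4*r+2) = 4*(r^2+r+1) - 2*r - 4" by (simp add: algebra_simps power2_eq_square)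
  then have "r * (4*r+2) = -2*r-4" using r by simp
  then show "phi r = r" unfolding phi_def nr dr using nz
    by (simp add: divide_eq_eq)
  have dn: "(phi_num has_field_derivative (-(4*r^3)-3*r^2+6*r+2)) (at r)"
    unfolding nform[abs_def] by (rule derivative_eq_intros refl | simp)+
  have dd: "(phi_den has_field_derivative (-(6*r^2)-6*r+1)) (at r)"
    unfolding dform[abs_def] by (rule derivative_eq_intros refl | simp)+
  have "((\<lambda>z. phi_num z / phi_den z) has_field_derivative
      ((-(4*r^3)-3*r^2+6*r+2) * phi_den r - phi_num r * (-(6*r^2)-6*r+1)) / (phi_den r * phi_den r)) (at r)"
    by (rule DERIV_divide[OF dn dd dnz])
  moreover have "((-(4*r^3)-3*r^2+6*r+2) * phi_den r - phi_num r * (-(6*r^2)-6*r+1)) / (phi_den r * phi_den r) = 1/2"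
  proof -
    have a: "(-(4*r^3)-3*r^2+6*r+2) = 9*r+1"
    proof -
      have "(-(4*r^3)-3*r^2+6*r+2) = -3*(r^2+r+1) + 9*r+1" unfolding r3 by (simp add: algebra_simps)
      then show ?thesis using r by simp
    qed
    have b: "-(6*r^2)-6*r+1 = 7"
    proof -
      have "-(6*r^2)-6*r+1 = -6*(r^2+r+1) + 7" by (simp add: algebra_simps)
      then show ?thesis using r by simp
    qed
    have c: "(9*r+1)*(4*r+2) - (-2*r-4)*7 = -6"
    proof -
      have "(9*r+1)*(4*r+2) - (-2*r-4)*7 = 36*(r^2+r+1) - 6" by (simp add: algebra_simps power2_eq_square)
      then show ?thesis using r by simp
    qed
    show ?thesis unfolding a b nr dr c sq by simp
  qed
  ultimately show "(phi has_field_derivative 1/2) (at r)" by (simp add: phi_def[abs_def])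
qed


lemma contraction_iter:
  fixes f :: "complex \<Rightarrow> complex"
  assumes cont: "continuous_on (ball 0 1) f"
    and f0: "f 0 = 0"
    and lt: "\<And>w. w \<noteq> 0 \<Longrightarrow> norm w < 1 \<Longrightarrow> norm (f w) < norm w"
    and w: "norm w < 1"
  shows "(\<lambda>n. (f^^n) w) \<longlonglongrightarrow> 0"
proof -
  have le: "norm (f u) \<le> norm u" if "norm u < 1" for u
    using lt[of u] that f0 by (cases "u = 0") auto
  define r where "r n = norm ((f^^n) w)" for n
  have rSuc: "r (Suc n) = norm (f ((f^^n) w))" for n by (simp add: r_def)
  have rle: "r n \<le> norm w" for n
  proof (induction n)
    case 0 then show ?case by (simp add: r_def)
  next
    case (Suc n)
    have "norm ((f^^n) w) < 1" using Suc w by (simp add: r_def)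
    then show ?case using le[of "(f^^n) w"] Suc by (simp add: rSuc r_def)
  qed
  have dec: "decseq r"
  proof (rule decseq_SucI)
    fix n
    have "norm ((f^^n) w) < 1" using rle[of n] w by (simp add: r_def)
    then show "r (Suc n) \<le> r n" using le[of "(f^^n) w"] by (simp add: rSuc r_def)
  qed
  obtain L where L: "r \<longlonglongrightarrow> L" "\<forall>i. L \<le> r i"
    using decseq_convergent[OF dec, of 0] by (auto simp: r_def)
  have "L = 0"
  proof (rule ccontr)
    assume "L \<noteq> 0"
    moreover have "L \<ge> 0" using L(1) by (rule LIMSEQ_le_const) (simp add: r_def)
    ultimately have Lpos: "L > 0" by simp
    define K where "K = cball (0::complex) (norm w) - ball 0 L"
    have Kc: "compact K" unfolding K_def by (intro compact_diff) auto
    have iterK: "(f^^n) w \<in> K" for n using rle[of n] spec[OF L(2), of n] by (auto simp: K_def r_def)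
    have Kne: "K \<noteq> {}" using iterK[of 0] by blast
    have Kball: "K \<subseteq> ball 0 1" using w by (auto simp: K_def)
    have "continuous_on K (\<lambda>u. norm u - norm (f u))"
      by (intro continuous_intros continuous_on_subset[OF cont Kball])
    then obtain x0 where x0: "x0 \<in> K" "\<And>y. y \<in> K \<Longrightarrow> norm x0 - norm (f x0) \<le> norm y - norm (f y)"
      using continuous_attains_inf[OF Kc Kne] by blast
    have "x0 \<noteq> 0" using x0(1) Lpos by (auto simp: K_def)
    moreover have "norm x0 < 1" using x0(1) Kball by auto
    ultimately have dpos: "norm x0 - norm (f x0) > 0" using lt[of x0] by simp
    have step: "r n - r (Suc n) \<ge> norm x0 - norm (f x0)" for n
      using x0(2)[OF iterK[of n]] by (simp add: rSuc r_def)
    have "(\<lambda>n. r n - r (Suc n)) \<longlonglongrightarrow> L - L"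
      by (intro tendsto_diff L(1) LIMSEQ_Suc)
    then have "eventually (\<lambda>n. r n - r (Suc n) < norm x0 - norm (f x0)) sequentially"
      using dpos by (intro order_tendstoD(2)) auto
    then obtain N where "r N - r (Suc N) < norm x0 - norm (f x0)"
      by (auto simp: eventually_sequentially)
    with step[of N] show False by simp
  qed
  with L(1) have "(\<lambda>n. norm ((f^^n) w)) \<longlonglongrightarrow> 0" by (simp add: r_def[abs_def])
  then show ?thesis by (simp add: tendsto_norm_zero_iff)
qed



definition Cm :: "complex \<Rightarrow> complex \<Rightarrow> complex" where
  "Cm a z = (z - a) / (z - cnj a)"
definition Ci :: "complex \<Rightarrow> complex \<Rightarrow> complex" where
  "Ci a w = (a - cnj a * w) / (1 - w)"

lemma norm_lt_sq: "norm (u::complex) < norm v \<longleftrightarrow> (Re u)^2 + (Im u)^2 < (Re v)^2 + (Im v)^2"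
  unfolding cmod_def by simp

lemma Cm_norm:
  assumes a: "Im a > 0" and z: "Im z > 0"
  shows "norm (Cm a z) < 1"
proof -
  have nz: "z - cnj a \<noteq> 0" using a z by (auto simp: complex_eq_iff)
  have "norm (z - a) < norm (z - cnj a)"
    unfolding norm_lt_sq using mult_pos_pos[OF a z] by (simp add: power2_eq_square algebra_simps)
  then show ?thesis using nz unfolding Cm_def by (simp add: norm_divide divide_less_eq)
qed

lemma Ci_Im:
  assumes a: "Im a > 0" and w: "norm w < 1"
  shows "Im (Ci a w) > 0"
proof -
  have w1: "w \<noteq> 1" using w by auto
  have d: "(Re (1 - w))^2 + (Im (1 - w))^2 > 0"
    using w1 by (simp add: complex_eq_iff sum_power2_gt_zero_iff)
  have ww: "(Re w)^2 + (Im w)^2 < 1" using w unfolding cmod_def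
    by (metis real_sqrt_less_iff real_sqrt_one)
  have "Im (Ci a w) = (Im (a - cnj a * w) * Re (1 - w) - Re (a - cnj a * w) * Im (1 - w)) /
           ((Re (1 - w))^2 + (Im (1 - w))^2)"
    unfolding Ci_def Im_divide ..
  also have "Im (a - cnj a * w) * Re (1 - w) - Re (a - cnj a * w) * Im (1 - w) = Im a * (1 - ((Re w)^2 + (Im w)^2))"
    by (simp add: algebra_simps power2_eq_square)
  finally show ?thesis using d ww a by simp
qed

lemma Ci_Cm:
  assumes a: "Im a > 0" and z: "Im z > 0"
  shows "Ci a (Cm a z) = z"
proof -
  have nz: "z - cnj a \<noteq> 0" using a z by (auto simp: complex_eq_iff)
  have na: "a - cnj a \<noteq> 0" using a by (auto simp: complex_eq_iff)
  have "1 - Cm a z = (a - cnj a) / (z - cnj a)" using nz unfolding Cm_def by (simp add: field_simps)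
  moreover have "a - cnj a * Cm a z = z * (a - cnj a) / (z - cnj a)" using nz unfolding Cm_def by (simp add: field_simps)
  ultimately show ?thesis using nz na unfolding Ci_def by simp
qed

lemma Cm_a: "Im a > 0 \<Longrightarrow> Cm a a = 0" by (simp add: Cm_def)
lemma Ci_0: "Ci a 0 = a" by (simp add: Ci_def)

lemma phi_holo: "phi holomorphic_on {z. Im z > 0}"
proof -
  have "(\<lambda>z. phi_num z / phi_den z) holomorphic_on {z. Im z > 0}"
  proof (rule holomorphic_on_divide)
    show "phi_num holomorphic_on {z. Im z > 0}" unfolding phi_num_def[abs_def] by (intro holomorphic_intros)
    show "phi_den holomorphic_on {z. Im z > 0}" unfolding phi_den_def[abs_def] by (intro holomorphic_intros)
    show "\<And>z. z \<in> {z. Im z > 0} \<Longrightarrow> phi_den z \<noteq> 0" using Im_pos_phi by auto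
  qed
  then show ?thesis by (simp add: phi_def[abs_def])
qed

lemma upper_conv:
  assumes a: "Im a > 0" and fx: "phi a = a" and der: "(phi has_field_derivative 1/2) (at a)"
    and z: "Im z > 0"
  shows "(\<lambda>n. (phi^^n) z) \<longlonglongrightarrow> a"
proof -
  define H where "H = {z::complex. Im z > 0}"
  define f where "f = Cm a \<circ> phi \<circ> Ci a"
  have fw: "f w = Cm a (phi (Ci a w))" for w by (simp add: f_def)
  have na: "a - cnj a \<noteq> 0" using a by (auto simp: complex_eq_iff)
  have hCi: "Ci a holomorphic_on ball 0 1"
    unfolding Ci_def by (intro holomorphic_intros) auto
  have hphi: "phi holomorphic_on H" using phi_holo by (simp add: H_def)
  have hCm: "Cm a holomorphic_on H"
    unfolding Cm_def[abs_def] H_def using a by (intro holomorphic_intros) (auto simp: complex_eq_iff)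
  have iCi: "Ci a ` ball 0 1 \<subseteq> H" using Ci_Im[OF a] by (auto simp: H_def)
  have iphi: "phi ` H \<subseteq> H" using Im_pos_phi by (auto simp: H_def)
  have holf: "f holomorphic_on ball 0 1"
    unfolding f_def using holomorphic_on_compose_gen[OF hCi holomorphic_on_compose_gen[OF hphi hCm iphi] iCi] .
  have f0: "f 0 = 0" using fx a by (simp add: fw Ci_0 Cm_a)
  have fno: "norm (f w) < 1" if "norm w < 1" for w
    using Cm_norm[OF a] Im_pos_phi Ci_Im[OF a that] by (simp add: fw)
  have dCi: "(Ci a has_field_derivative (a - cnj a)) (at 0)"
  proof -
    have n: "((\<lambda>w. a - cnj a * w) has_field_derivative (- cnj a)) (at 0)"
      by (auto intro!: derivative_eq_intros)
    have d: "((\<lambda>w. 1 - w) has_field_derivative (-1)) (at (0::complex))"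
      by (auto intro!: derivative_eq_intros)
    have "((\<lambda>w. (a - cnj a * w) / (1 - w)) has_field_derivative
        ((- cnj a) * (1 - 0) - (a - cnj a * 0) * (-1)) / ((1 - 0) * (1 - 0))) (at 0)"
      by (rule DERIV_divide[OF n d]) simp
    then show ?thesis by (simp add: Ci_def[abs_def])
  qed
  have dCm: "(Cm a has_field_derivative 1 / (a - cnj a)) (at a)"
  proof -
    have n: "((\<lambda>w. w - a) has_field_derivative 1) (at a)"
      by (auto intro!: derivative_eq_intros)
    have d: "((\<lambda>w. w - cnj a) has_field_derivative 1) (at a)"
      by (auto intro!: derivative_eq_intros)
    have "((\<lambda>w. (w - a) / (w - cnj a)) has_field_derivative
        (1 * (a - cnj a) - (a - a) * 1) / ((a - cnj a) * (a - cnj a))) (at a)"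
      by (rule DERIV_divide[OF n d]) (use na in simp)
    then show ?thesis using na by (simp add: Cm_def[abs_def])
  qed
  have der': "(phi has_field_derivative 1/2) (at (Ci a 0))" using der by (simp add: Ci_0)
  have d1: "((\<lambda>w. phi (Ci a w)) has_field_derivative 1/2 * (a - cnj a)) (at 0)"
    by (rule DERIV_chain'[OF dCi der'])
  have dCm': "(Cm a has_field_derivative 1 / (a - cnj a)) (at (phi (Ci a 0)))" using dCm fx by (simp add: Ci_0)
  have "((\<lambda>w. Cm a (phi (Ci a w))) has_field_derivative 1 / (a - cnj a) * (1/2 * (a - cnj a))) (at 0)"
    by (rule DERIV_chain'[OF d1 dCm'])
  then have "(f has_field_derivative 1/2) (at 0)" using na by (simp add: fw[abs_def])
  then have df: "deriv f 0 = 1/2" by (rule DERIV_imp_deriv)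
  have strict: "norm (f w) < norm w" if wnz: "w \<noteq> 0" and wlt: "norm w < 1" for w
  proof -
    have le: "norm (f w) \<le> norm w" using Schwarz_Lemma(1)[OF holf f0 fno wlt] .
    have "norm (f w) \<noteq> norm w"
    proof
      assume eq: "norm (f w) = norm w"
      then obtain \<alpha> where al: "\<forall>z. norm z < 1 \<longrightarrow> f z = \<alpha> * z" "norm \<alpha> = 1"
        using Schwarz_Lemma(3)[OF holf f0 fno wlt] wnz wlt by blast
      have "deriv f 0 = deriv (\<lambda>z. \<alpha> * z) 0"
        by (rule complex_derivative_transform_within_open[OF holf _ open_ball]) (use al in \<open>auto intro: holomorphic_intros\<close>)
      then have "deriv f 0 = \<alpha>" by simp
      with df have "\<alpha> = 1/2" by simp
      with al(2) show False by simp
    qed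
    with le show ?thesis by simp
  qed
  have contf: "continuous_on (ball 0 1) f" using holf by (rule holomorphic_on_imp_continuous_on)
  have w0: "norm (Cm a z) < 1" using Cm_norm[OF a z] .
  have conv: "(\<lambda>n. (f^^n) (Cm a z)) \<longlonglongrightarrow> 0"
    by (rule contraction_iter[OF contf f0 strict w0])
  have it: "Im ((phi^^n) z) > 0 \<and> (f^^n) (Cm a z) = Cm a ((phi^^n) z)" for n
  proof (induction n)
    case 0 then show ?case using z by simp
  next
    case (Suc n)
    then show ?case using Im_pos_phi[of "(phi^^n) z"] by (simp add: fw Ci_Cm[OF a])
  qed
  have eqn: "(phi^^n) z = Ci a ((f^^n) (Cm a z))" for n using it[of n] Ci_Cm[OF a] by simp
  have "isCont (Ci a) 0" unfolding Ci_def[abs_def] by (intro continuous_intros) auto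
  from isCont_tendsto_compose[OF this conv] show ?thesis by (simp add: eqn Ci_0)
qed


lemma omega2_root: "(omega^2)^2 + omega^2 + 1 = 0"
proof -
  have "(omega^2)^2 + omega^2 + 1 = (omega^2 + omega + 1) * (omega^2 - omega + 1)"
    by (simp add: algebra_simps power2_eq_square)
  then show ?thesis using omega_root by simp
qed

lemma iter_cnj: "(phi^^n) (cnj z) = cnj ((phi^^n) z)"
  by (induction n) (simp_all add: phi_cnj)

theorem lemma3p7:
  shows "phi omega = omega \<and> phi_den omega \<noteq> 0 \<and> cmod (deriv phi omega) < 1
       \<and> phi (omega^2) = omega^2 \<and> phi_den (omega^2) \<noteq> 0 \<and> cmod (deriv phi (omega^2)) < 1
       \<and> (\<forall>z. Im z > 0 \<longrightarrow> (\<lambda>n. (phi ^^ n) z) \<longlonglongrightarrow> omega)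
       \<and> (\<forall>z. Im z < 0 \<longrightarrow> (\<lambda>n. (phi ^^ n) z) \<longlonglongrightarrow> omega^2)
       \<and> phi_hat ` ext_real_line \<subseteq> ext_real_line
       \<and> phi_hat -` ext_real_line \<subseteq> ext_real_line"
proof -
  note o1 = fixed_root[OF omega_root]
  note o2 = fixed_root[OF omega2_root]
  have d1: "deriv phi omega = 1/2" by (rule DERIV_imp_deriv[OF o1(3)])
  have d2: "deriv phi (omega^2) = 1/2" by (rule DERIV_imp_deriv[OF o2(3)])
  have up: "\<forall>z. Im z > 0 \<longrightarrow> (\<lambda>n. (phi ^^ n) z) \<longlonglongrightarrow> omega"
    using upper_conv[OF omega_Im o1(2) o1(3)] by blast
  have low: "\<forall>z. Im z < 0 \<longrightarrow> (\<lambda>n. (phi ^^ n) z) \<longlonglongrightarrow> omega^2"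
  proof (intro allI impI)
    fix z :: complex assume "Im z < 0"
    then have "Im (cnj z) > 0" by simp
    then have "(\<lambda>n. (phi ^^ n) (cnj z)) \<longlonglongrightarrow> omega" using up by blast
    then have "(\<lambda>n. cnj ((phi ^^ n) (cnj z))) \<longlonglongrightarrow> cnj omega" by (rule tendsto_cnj)
    then show "(\<lambda>n. (phi ^^ n) z) \<longlonglongrightarrow> omega^2" by (simp add: iter_cnj omega_cnj)
  qed
  have n1: "cmod (deriv phi omega) < 1" unfolding d1 by simp
  have n2: "cmod (deriv phi (omega^2)) < 1" unfolding d2 by simp
  show ?thesis using o1 o2 n1 n2 up low ext_real_fwd ext_real_bwd by simp
qed

end
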